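(* Let $G$ be the lattice $\mathbb Z$ (neighbours $x\pm1$), unweighted, with $\mu\equiv1$, so $\Delta u(x)=u(x+1)-2u(x)+u(x-1)$ and $L=-\Delta$. Then for every $v:\mathbb Z\to\mathbb R$ and $x\in\mathbb Z$, $$\Delta\Psi_{\Upsilon'}(v)(x)\ge2e^{-Lv(x)/2}\,\Upsilon(Lv(x))+\Theta(v)(x),\qquad \Theta(v)(x):=\sum_{y\in\{x-1,x+1\}}e^{v(y)-v(x)}\big(e^{-Lv(y)}-1+Lv(x)\big).$$ Moreover, if $Lv(x)\ge1$, then $\Theta(v)(x)\ge2e^{-Lv(x)/2}(Lv(x)-1)$.
   Context: $\Psi_H(v)(x)=\sum_{y\in\{x-1,x+1\}}H(v(y)-v(x))$; $\Upsilon(z)=e^z-1-z$, $\Upsilon'(z)=e^z-1$. *)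

theory Defs
  imports Complex_Main
begin

definition lap :: "(int \<Rightarrow> real) \<Rightarrow> int \<Rightarrow> real" where
  "lap u x = u (x + 1) - 2 * u x + u (x - 1)"

definition Lop :: "(int \<Rightarrow> real) \<Rightarrow> int \<Rightarrow> real" where
  "Lop u x = - lap u x"

definition Psi :: "(real \<Rightarrow> real) \<Rightarrow> (int \<Rightarrow> real) \<Rightarrow> int \<Rightarrow> real" where
  "Psi H v x = (\<Sum>y\<in>{x - 1, x + 1}. H (v y - v x))"

definition Upsilon :: "real \<Rightarrow> real" where
  "Upsilon z = exp z - 1 - z"

definition Upsilon' :: "real \<Rightarrow> real" where
  "Upsilon' z = exp z - 1"

definition Theta :: "(int \<Rightarrow> real) \<Rightarrow> int \<Rightarrow> real" where
  "Theta v x = (\<Sum>y\<in>{x - 1, x + 1}. exp (v y - v x) * (exp (- Lop v y) - 1 + Lop v x))"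

end

theory Submission
  imports Defs
begin

lemma amgm_exp: "exp a + exp b \<ge> 2 * exp ((a + b) / 2)" for a b :: real
proof -
  have ea: "exp a = exp (a/2) * exp (a/2)" by (simp flip: exp_add)
  have eb: "exp b = exp (b/2) * exp (b/2)" by (simp flip: exp_add)
  have ec: "exp ((a+b)/2) = exp (a/2) * exp (b/2)" by (simp flip: exp_add add: add_divide_distrib)
  have "0 \<le> (exp (a/2) - exp (b/2))^2" by simp
  thus ?thesis unfolding ea eb ec by (simp add: power2_eq_square algebra_simps)
qed

lemma key:
  fixes a b c d l :: real
  assumes "a + b = - l"
  shows "exp (-a) + exp (-b) + exp c + exp d - 2 * exp a - 2 * exp b
     \<ge> 2 * exp (- l / 2) * (exp l - 1 - l) + (exp a * (exp (-(a - d)) - 1 + l) + exp b * (exp (-(b - c)) - 1 + l))"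
  and "l \<ge> 1 \<Longrightarrow> exp a * (exp (-(a - d)) - 1 + l) + exp b * (exp (-(b - c)) - 1 + l) \<ge> 2 * exp (- l / 2) * (l - 1)"
proof -
  have s: "exp a + exp b \<ge> 2 * exp (- l / 2)" using amgm_exp[of a b] assms by simp
  have na: "exp (-a) = exp b * exp l" using assms by (simp flip: exp_add add: algebra_simps)
  have nb: "exp (-b) = exp a * exp l" using assms by (simp flip: exp_add add: algebra_simps)
  have ed: "exp a * exp (-(a - d)) = exp d" by (simp flip: exp_add)
  have ec: "exp b * exp (-(b - c)) = exp c" by (simp flip: exp_add)
  have pos: "exp l - 1 - l \<ge> 0" using exp_ge_add_one_self[of l] by linarith
  have "exp (-a) + exp (-b) + exp c + exp d - 2 * exp a - 2 * exp b
      - (exp a * (exp (-(a - d)) - 1 + l) + exp b * (exp (-(b - c)) - 1 + l))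
      = (exp a + exp b) * (exp l - 1 - l)"
    unfolding na nb using ed ec by (simp add: algebra_simps)
  moreover have "(exp a + exp b) * (exp l - 1 - l) \<ge> 2 * exp (- l / 2) * (exp l - 1 - l)"
    using mult_right_mono[OF s pos] .
  ultimately show "exp (-a) + exp (-b) + exp c + exp d - 2 * exp a - 2 * exp b
     \<ge> 2 * exp (- l / 2) * (exp l - 1 - l) + (exp a * (exp (-(a - d)) - 1 + l) + exp b * (exp (-(b - c)) - 1 + l))"
    by linarith
  assume l1: "l \<ge> 1"
  have "exp a * (exp (-(a - d)) - 1 + l) + exp b * (exp (-(b - c)) - 1 + l)
      = exp d + exp c + (exp a + exp b) * (l - 1)" using ed ec by (simp add: algebra_simps)
  moreover have "(exp a + exp b) * (l - 1) \<ge> 2 * exp (- l / 2) * (l - 1)"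
    using mult_right_mono[OF s] l1 by simp
  moreover have "exp d + exp c > 0" by (simp add: add_pos_pos)
  ultimately show "exp a * (exp (-(a - d)) - 1 + l) + exp b * (exp (-(b - c)) - 1 + l) \<ge> 2 * exp (- l / 2) * (l - 1)"
    by linarith
qed

theorem lemma5p5:
  fixes v :: "int \<Rightarrow> real" and x :: int
  shows "lap (Psi Upsilon' v) x \<ge> 2 * exp (- Lop v x / 2) * Upsilon (Lop v x) + Theta v x
     \<and> (Lop v x \<ge> 1 \<longrightarrow> Theta v x \<ge> 2 * exp (- Lop v x / 2) * (Lop v x - 1))"
proof -
  define a where "a = v (x - 1) - v x"
  define b where "b = v (x + 1) - v x"
  define c where "c = v (x + 2) - v (x + 1)"
  define d where "d = v (x - 2) - v (x - 1)"
  define l where "l = Lop v x"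
  have ne: "\<And>y::int. y - 1 \<noteq> y + 1" by simp
  have P: "\<And>y. Psi Upsilon' v y = exp (v (y - 1) - v y) + exp (v (y + 1) - v y) - 2"
    unfolding Psi_def Upsilon'_def using ne by simp
  have L: "\<And>y. Lop v y = - (v (y + 1) - 2 * v y + v (y - 1))" unfolding Lop_def lap_def by simp
  have lab: "a + b = - l" unfolding a_def b_def l_def L by simp
  have lx1: "Lop v (x + 1) = b - c" unfolding L b_def c_def by (simp add: algebra_simps)
  have lxm: "Lop v (x - 1) = a - d" unfolding L a_def d_def by (simp add: algebra_simps)
  have T: "Theta v x = exp a * (exp (-(a - d)) - 1 + l) + exp b * (exp (-(b - c)) - 1 + l)"
    unfolding Theta_def using ne lx1 lxm by (simp add: a_def b_def l_def)
  have LP: "lap (Psi Upsilon' v) x = exp (-a) + exp (-b) + exp c + exp d - 2 * exp a - 2 * exp b"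
    unfolding lap_def P a_def b_def c_def d_def by (simp add: algebra_simps)
  show ?thesis
    unfolding LP T Upsilon_def l_def[symmetric] using key[OF lab] by simp
qed

end
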